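(* There is an absolute constant $c_0>0$ such that for all $0<\mu<c_0$ there is $n_0$ such that for all even $n\ge n_0$ the following holds. Let $D\subseteq[n-1]$ with $|D|=\mu n+1$ and let $\mathbf{G}$ be chosen uniformly at random from $\mathcal{G}^{\mathrm{col}}_D$. Then $\mathbb{P}[\mathbf{G}\text{ is quasirandom}]\ge 1-\exp(-\mu^3n^2)$.
   Context: Fix a vertex set $V$ with $|V|=n$, $n$ even. For $D\subseteq[n-1]$, $\mathcal{G}^{\mathrm{col}}_D$ is the set of pairs $(G,\phi_G)$ where $G$ is a $|D|$-regular graph on $V$ and $\phi_G$ is a 1-factorization of $G$ with colour set $D$. For (not necessarily distinct or disjoint) $A,B\subseteq V$, $e_G(A,B)$ is the number of edges $ab\in E(G)$ with $a\in A$, $b\in B$. $G\in\mathcal{G}^{\mathrm{col}}_D$ is quasirandom if for all $A,B\subseteq V$ with $|A|=|B|=|D|$ we have $e_G(A,B)<8(|D|-1)^3/n$. *)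

theory Defs
  imports Complex_Main
begin

definition all_edges :: "nat \<Rightarrow> nat set set" where
  "all_edges n = {e. e \<subseteq> {..<n} \<and> card e = 2}"

definition degree :: "nat set set \<Rightarrow> nat \<Rightarrow> nat" where
  "degree G v = card {e \<in> G. v \<in> e}"

definition perfect_matching :: "nat \<Rightarrow> nat set set \<Rightarrow> bool" where
  "perfect_matching n M \<longleftrightarrow> M \<subseteq> all_edges n \<and> (\<forall>v \<in> {..<n}. \<exists>!e. e \<in> M \<and> v \<in> e)"

text \<open>Coloured graphs: pairs (G, phi) with G a |D|-regular graph on V and phi a
  1-factorization of G with colour set D (each colour class is a perfect matching of V).
  phi is taken extensional: phi e = 0 for non-edges (0 is not a colour since D is in [n-1]).\<close>

definition col_graphs :: "nat \<Rightarrow> nat set \<Rightarrow> (nat set set \<times> (nat set \<Rightarrow> nat)) set" where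
  "col_graphs n D = {(G, \<phi>). G \<subseteq> all_edges n
      \<and> (\<forall>v \<in> {..<n}. degree G v = card D)
      \<and> (\<forall>e \<in> G. \<phi> e \<in> D)
      \<and> (\<forall>e. e \<notin> G \<longrightarrow> \<phi> e = 0)
      \<and> (\<forall>d \<in> D. perfect_matching n {e \<in> G. \<phi> e = d})}"

definition e_G :: "nat set set \<Rightarrow> nat set \<Rightarrow> nat set \<Rightarrow> nat" where
  "e_G G A B = card {(a, b). a \<in> A \<and> b \<in> B \<and> {a, b} \<in> G}"

definition quasirandom :: "nat \<Rightarrow> nat set \<Rightarrow> nat set set \<Rightarrow> bool" where
  "quasirandom n D G \<longleftrightarrow>
     (\<forall>A B. A \<subseteq> {..<n} \<and> B \<subseteq> {..<n} \<and> card A = card D \<and> card B = card D \<longrightarrow>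
        real (e_G G A B) < 8 * (real (card D) - 1) ^ 3 / real n)"

definition prob_quasirandom :: "nat \<Rightarrow> nat set \<Rightarrow> real" where
  "prob_quasirandom n D =
     real (card {x \<in> col_graphs n D. quasirandom n D (fst x)}) / real (card (col_graphs n D))"

end

theory Submission
  imports Defs "HOL-Analysis.Harmonic_Numbers"
begin


lemma card_ins_diff: "finite T \<Longrightarrow> w \<in> T \<Longrightarrow> u \<notin> T \<Longrightarrow> card (insert u (T - {w})) = card T"
  by (simp add: card_Diff_singleton) (metis card_gt_0_iff empty_iff Suc_pred)

lemma set_swap_eq: "v \<in> u \<Longrightarrow> v \<in> w \<Longrightarrow> v \<notin> p \<Longrightarrow> v \<notin> q \<Longrightarrow>
   {e \<in> insert u (insert p (S - {w, q})). v\<in>e} = insert u ({e\<in>S. v\<in>e} - {w})"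
  by blast
lemma set_swap_eq0: "v \<notin> u \<Longrightarrow> v \<notin> w \<Longrightarrow> v \<notin> p \<Longrightarrow> v \<notin> q \<Longrightarrow>
   {e \<in> insert u (insert p (S - {w, q})). v\<in>e} = {e\<in>S. v\<in>e}"
  by blast

lemma swap_card:
  fixes S :: "'a set set"
  assumes fin: "finite S" and ab: "{a,b}\<in>S" and xy: "{x,y}\<in>S" and ax: "{a,x}\<notin>S" and by': "{b,y}\<notin>S"
    and dist: "distinct [a,b,x,y]"
  shows "card {e \<in> insert {a,x} (insert {b,y} (S - {{a,b},{x,y}})). v \<in> e} = card {e\<in>S. v\<in>e}"
proof -
  let ?T = "{e\<in>S. v\<in>e}"
  have fT: "finite ?T" using fin by simp
  have c1: "insert {a,x} (insert {b,y} (S - {{a,b},{x,y}})) = insert {b,y} (insert {a,x} (S - {{a,b},{x,y}}))"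
    by (rule insert_commute)
  have c2: "{{a,b},{x,y}} = {{x,y},{a,b}}" by (rule insert_commute)
  consider "v = a" | "v = b" | "v = x" | "v = y" | "v \<notin> {a,b,x,y}" by auto
  then show ?thesis
  proof cases
    case 1
    have "card (insert {a,x} (?T - {{a,b}})) = card ?T"
      by (rule card_ins_diff[OF fT]) (use ab ax 1 in auto)
    then show ?thesis using 1 dist by (subst set_swap_eq) auto
  next
    case 2
    have "card (insert {b,y} (?T - {{a,b}})) = card ?T"
      by (rule card_ins_diff[OF fT]) (use ab by' 2 in auto)
    then show ?thesis using 2 dist unfolding c1 by (subst set_swap_eq) auto
  next
    case 3
    have "card (insert {a,x} (?T - {{x,y}})) = card ?T"
      by (rule card_ins_diff[OF fT]) (use xy ax 3 in auto)
    then show ?thesis using 3 dist unfolding c2 by (subst set_swap_eq) auto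
  next
    case 4
    have "card (insert {b,y} (?T - {{x,y}})) = card ?T"
      by (rule card_ins_diff[OF fT]) (use xy by' 4 in auto)
    moreover have "{e \<in> insert {b,y} (insert {a,x} (S - {{x,y},{a,b}})). v \<in> e} = insert {b,y} (?T - {{x,y}})"
      by (rule set_swap_eq) (use 4 dist in auto)
    moreover have "insert {a,x} (insert {b,y} (S - {{a,b},{x,y}})) = insert {b,y} (insert {a,x} (S - {{x,y},{a,b}}))"
      using c1 c2 by simp
    ultimately show ?thesis by simp
  next
    case 5
    then show ?thesis by (subst set_swap_eq0) auto
  qed
qed


definition swG :: "nat set set \<Rightarrow> nat \<Rightarrow> nat \<Rightarrow> nat \<Rightarrow> nat \<Rightarrow> nat set set" where
  "swG G a b x y = insert {a,x} (insert {b,y} (G - {{a,b},{x,y}}))"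
definition swP :: "(nat set \<Rightarrow> nat) \<Rightarrow> nat \<Rightarrow> nat \<Rightarrow> nat \<Rightarrow> nat \<Rightarrow> (nat set \<Rightarrow> nat)" where
  "swP \<phi> a b x y = \<phi>({a,b}:=0, {x,y}:=0, {a,x}:=\<phi> {a,b}, {b,y}:=\<phi> {a,b})"
definition good :: "nat set set \<Rightarrow> (nat set \<Rightarrow> nat) \<Rightarrow> nat \<Rightarrow> nat \<Rightarrow> nat \<Rightarrow> nat \<Rightarrow> bool" where
  "good G \<phi> a b x y \<longleftrightarrow> {a,b}\<in>G \<and> {x,y}\<in>G \<and> \<phi> {x,y} = \<phi> {a,b} \<and> {a,x}\<notin>G \<and> {b,y}\<notin>G \<and> distinct [a,b,x,y]"

lemma finite_all_edges: "finite (all_edges n)"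
  unfolding all_edges_def by (rule finite_subset[of _ "Pow {..<n}"]) auto

lemma pm_card: assumes "M \<subseteq> all_edges n"
  shows "perfect_matching n M \<longleftrightarrow> (\<forall>v\<in>{..<n}. card {e\<in>M. v\<in>e} = 1)"
proof -
  have "(\<exists>!e. e \<in> M \<and> v \<in> e) \<longleftrightarrow> card {e\<in>M. v\<in>e} = 1" for v
  proof
    assume "\<exists>!e. e \<in> M \<and> v \<in> e"
    then obtain e where "{e\<in>M. v\<in>e} = {e}" by auto
    then show "card {e\<in>M. v\<in>e} = 1" by simp
  next
    assume "card {e\<in>M. v\<in>e} = 1"
    then obtain e where "{e\<in>M. v\<in>e} = {e}" using card_1_singleton_iff by (metis One_nat_def)
    then show "\<exists>!e. e \<in> M \<and> v \<in> e" by (metis (mono_tags, lifting) mem_Collect_eq singletonD singletonI)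
  qed
  then show ?thesis unfolding perfect_matching_def using assms by auto
qed

lemma swP_alt:
  assumes "distinct [a,b,x,y]"
  shows "swP \<phi> a b x y e = (if e = {a,x} \<or> e = {b,y} then \<phi> {a,b} else if e = {a,b} \<or> e = {x,y} then 0 else \<phi> e)"
proof -
  have neq: "{a,x} \<noteq> {b,y}" "{a,x} \<noteq> {a,b}" "{a,x} \<noteq> {x,y}" "{b,y} \<noteq> {a,b}" "{b,y} \<noteq> {x,y}" "{a,b} \<noteq> {x,y}"
    using assms by (auto simp: doubleton_eq_iff)
  show ?thesis unfolding swP_def using neq by (auto simp del: insert_commute)
qed

lemma swG_mem: "e \<in> swG G a b x y \<longleftrightarrow> e = {a,x} \<or> e = {b,y} \<or> (e \<in> G \<and> e \<noteq> {a,b} \<and> e \<noteq> {x,y})"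
  unfolding swG_def by blast

lemma sw_class_c:
  assumes dist: "distinct [a,b,x,y]" and T: "d = \<phi>{a,b}"
  shows "(e \<in> swG G a b x y \<and> swP \<phi> a b x y e = d) \<longleftrightarrow> e \<in> insert {a,x} (insert {b,y} ({e\<in>G. \<phi> e = d} - {{a,b},{x,y}}))"
proof -
  have neq: "{a,x} \<noteq> {b,y}" "{a,x} \<noteq> {a,b}" "{a,x} \<noteq> {x,y}" "{b,y} \<noteq> {a,b}" "{b,y} \<noteq> {x,y}" "{a,b} \<noteq> {x,y}"
    using dist by (auto simp: doubleton_eq_iff)
  show ?thesis
  unfolding swG_mem swP_alt[OF dist] using neq T
  apply (cases "e = {a,x}")
   apply simp
  apply (cases "e = {b,y}")
   apply simp
  apply (simp only: if_False simp_thms insert_iff Diff_iff mem_Collect_eq)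
  by auto
qed

lemma sw_class_other:
  assumes dist: "distinct [a,b,x,y]" and T: "d \<noteq> \<phi>{a,b}" and cxy: "\<phi>{x,y} = \<phi>{a,b}"
   and ax: "{a,x}\<notin>G" and by': "{b,y}\<notin>G"
  shows "(e \<in> swG G a b x y \<and> swP \<phi> a b x y e = d) \<longleftrightarrow> e \<in> G \<and> \<phi> e = d"
proof -
  have neq: "{a,x} \<noteq> {b,y}" "{a,x} \<noteq> {a,b}" "{a,x} \<noteq> {x,y}" "{b,y} \<noteq> {a,b}" "{b,y} \<noteq> {x,y}" "{a,b} \<noteq> {x,y}"
    using dist by (auto simp: doubleton_eq_iff)
  show ?thesis
  unfolding swG_mem swP_alt[OF dist] using neq T ax by'
  apply (cases "e = {a,x}")
   apply simp
  apply (cases "e = {b,y}")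
   apply simp
  apply (simp only: if_False simp_thms insert_iff Diff_iff mem_Collect_eq)
  using T cxy by auto
qed

lemma sw_col:
  assumes X: "(G,\<phi>) \<in> col_graphs n D" and g: "good G \<phi> a b x y"
  shows "(swG G a b x y, swP \<phi> a b x y) \<in> col_graphs n D"
proof -
  let ?c = "\<phi> {a,b}"
  from X have GE: "G \<subseteq> all_edges n" and deg: "\<forall>v\<in>{..<n}. degree G v = card D"
    and col: "\<forall>e\<in>G. \<phi> e \<in> D" and zero: "\<forall>e. e \<notin> G \<longrightarrow> \<phi> e = 0"
    and pm: "\<forall>d\<in>D. perfect_matching n {e\<in>G. \<phi> e = d}"
    unfolding col_graphs_def by auto
  from g have ab: "{a,b}\<in>G" and xy: "{x,y}\<in>G" and cxy: "\<phi> {x,y} = ?c" and ax: "{a,x}\<notin>G"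
    and by': "{b,y}\<notin>G" and dist: "distinct [a,b,x,y]" unfolding good_def by auto
  have fG: "finite G" using GE finite_all_edges finite_subset by blast
  have ab_n: "a < n" "b < n" using ab GE unfolding all_edges_def by auto
  have xy_n: "x < n" "y < n" using xy GE unfolding all_edges_def by auto
  have neq: "{a,x} \<noteq> {b,y}" "{a,x} \<noteq> {a,b}" "{a,x} \<noteq> {x,y}" "{b,y} \<noteq> {a,b}" "{b,y} \<noteq> {x,y}" "{a,b} \<noteq> {x,y}"
    using dist by (auto simp: doubleton_eq_iff)
  have G'E: "swG G a b x y \<subseteq> all_edges n"
    using GE ab_n xy_n dist unfolding swG_def all_edges_def by auto
  have deg': "\<forall>v\<in>{..<n}. degree (swG G a b x y) v = card D"
    using deg swap_card[OF fG ab xy ax by' dist] unfolding degree_def swG_def by simp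
  have cD: "?c \<in> D" using col ab by auto
  have col': "\<forall>e\<in>swG G a b x y. swP \<phi> a b x y e \<in> D"
  proof
    fix e assume "e \<in> swG G a b x y"
    then have "e = {a,x} \<or> e = {b,y} \<or> (e\<in>G \<and> e\<noteq>{a,b} \<and> e\<noteq>{x,y})" by (simp only: swG_mem)
    then show "swP \<phi> a b x y e \<in> D" unfolding swP_alt[OF dist] using col cD by (simp del: insert_commute) blast
  qed
  have zero': "\<forall>e. e \<notin> swG G a b x y \<longrightarrow> swP \<phi> a b x y e = 0"
  proof (intro allI impI)
    fix e assume "e \<notin> swG G a b x y"
    then have "e \<noteq> {a,x} \<and> e \<noteq> {b,y} \<and> (e\<notin>G \<or> e={a,b} \<or> e={x,y})" by (simp only: swG_mem) blast
    then show "swP \<phi> a b x y e = 0" unfolding swP_alt[OF dist] using zero by (simp del: insert_commute) blast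
  qed
  have pm': "perfect_matching n {e\<in>swG G a b x y. swP \<phi> a b x y e = d}" if d: "d \<in> D" for d
  proof (cases "d = ?c")
    case True
    let ?M = "{e\<in>G. \<phi> e = d}"
    have "e\<in>swG G a b x y \<and> swP \<phi> a b x y e = d \<longleftrightarrow> e \<in> insert {a,x} (insert {b,y} (?M - {{a,b},{x,y}}))" for e
      by (rule sw_class_c[where \<phi>=\<phi>, OF dist True])
    then have eq: "{e\<in>swG G a b x y. swP \<phi> a b x y e = d} = insert {a,x} (insert {b,y} (?M - {{a,b},{x,y}}))"
      by (simp only: set_eq_iff mem_Collect_eq simp_thms)
    have ME: "?M \<subseteq> all_edges n" using GE by auto
    have fM: "finite ?M" using fG by simp
    have "?M \<subseteq> G" by auto
    have "\<forall>v\<in>{..<n}. card {e\<in>?M. v\<in>e} = 1" using pm d pm_card[OF ME] by auto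
    moreover have "card {e\<in>insert {a,x} (insert {b,y} (?M - {{a,b},{x,y}})). v\<in>e} = card {e\<in>?M. v\<in>e}" for v
      by (rule swap_card[OF fM]) (use ab xy ax by' dist True cxy in auto)
    ultimately have "\<forall>v\<in>{..<n}. card {e\<in>insert {a,x} (insert {b,y} (?M - {{a,b},{x,y}})). v\<in>e} = 1"
      by simp
    moreover have "insert {a,x} (insert {b,y} (?M - {{a,b},{x,y}})) \<subseteq> all_edges n"
      using G'E eq by auto
    ultimately show ?thesis unfolding eq using pm_card by blast
  next
    case False
    have "e\<in>swG G a b x y \<and> swP \<phi> a b x y e = d \<longleftrightarrow> e \<in> G \<and> \<phi> e = d" for e
      using sw_class_other[OF dist False cxy ax by'] by simp
    then have eq: "{e\<in>swG G a b x y. swP \<phi> a b x y e = d} = {e\<in>G. \<phi> e = d}"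
      by (simp only: set_eq_iff mem_Collect_eq simp_thms)
    show ?thesis unfolding eq using pm d by auto
  qed
  show ?thesis unfolding col_graphs_def using G'E deg' col' zero' pm' by auto
qed


lemma nbr_card: assumes "G \<subseteq> all_edges n"
  shows "card {x. {v,x}\<in>G} = card {e\<in>G. v\<in>e}"
proof -
  have "bij_betw (\<lambda>x. {v,x}) {x. {v,x}\<in>G} {e\<in>G. v\<in>e}"
  proof (rule bij_betwI')
    fix x x' assume "x \<in> {x. {v,x}\<in>G}" "x' \<in> {x. {v,x}\<in>G}"
    then have "card {v,x} = 2" "card {v,x'} = 2" using assms unfolding all_edges_def by auto
    then have "x \<noteq> v" "x' \<noteq> v" by (auto split: if_splits)
    show "({v,x} = {v,x'}) = (x = x')"
    proof
      assume "{v,x} = {v,x'}" then have "x \<in> {v,x'}" by blast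
      then show "x = x'" using \<open>x \<noteq> v\<close> by blast
    qed simp
  next
    fix x assume "x \<in> {x. {v,x}\<in>G}" then show "{v,x} \<in> {e\<in>G. v\<in>e}" by auto
  next
    fix e assume e: "e \<in> {e\<in>G. v\<in>e}"
    then have "card e = 2" using assms unfolding all_edges_def by auto
    then obtain p q where "e = {p,q}" "p \<noteq> q" by (meson card_2_iff)
    show "\<exists>x\<in>{x. {v,x}\<in>G}. e = {v,x}"
    proof (cases "v = p")
      case True then show ?thesis using e \<open>e = {p,q}\<close> by blast
    next
      case False then have "v = q" using e \<open>e = {p,q}\<close> by blast
      then have "e = {v,p}" using \<open>e = {p,q}\<close> by blast
      then show ?thesis using e by blast
    qed
  qed
  then show ?thesis by (rule bij_betw_same_card)
qed

lemma pm_sub: "perfect_matching n M \<Longrightarrow> M \<subseteq> all_edges n"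
  unfolding perfect_matching_def by blast

lemma partner_ex: assumes "perfect_matching n M" "x < n" shows "\<exists>!y. {x,y} \<in> M"
proof -
  from assms obtain e where e: "e \<in> M" "x \<in> e" and u: "\<And>e'. e'\<in>M \<Longrightarrow> x\<in>e' \<Longrightarrow> e' = e"
    unfolding perfect_matching_def by blast
  have "e \<in> all_edges n" using e(1) assms(1) unfolding perfect_matching_def by blast
  then have "card e = 2" unfolding all_edges_def by blast
  then obtain p q where pq: "e = {p,q}" "p \<noteq> q" by (meson card_2_iff)
  have "\<exists>y. e = {x,y}"
  proof (cases "x = p")
    case True then show ?thesis using pq by blast
  next
    case False then have "x = q" using e pq by blast
    then show ?thesis using pq by blast
  qed
  then obtain y where y: "e = {x,y}" by blast
  have "y' = y" if "{x,y'} \<in> M" for y'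
  proof -
    have "{x,y'} = e" using u that by auto
    then have "card {x,y'} = 2" using \<open>card e = 2\<close> by simp
    then have "x \<noteq> y'" by (auto split: if_splits)
    have "y' \<in> {x,y}" using \<open>{x,y'} = e\<close> y by blast
    moreover have "y \<in> {x,y'}" using \<open>{x,y'} = e\<close> y by blast
    ultimately show ?thesis using \<open>x \<noteq> y'\<close> by blast
  qed
  then show ?thesis using y e by blast
qed

definition pt :: "nat set set \<Rightarrow> nat \<Rightarrow> nat" where "pt M x = (THE y. {x,y} \<in> M)"

lemma pt_mem: "perfect_matching n M \<Longrightarrow> x < n \<Longrightarrow> {x, pt M x} \<in> M"
  unfolding pt_def by (rule theI') (rule partner_ex, assumption+)

lemma pt_eq: "perfect_matching n M \<Longrightarrow> {x,y} \<in> M \<Longrightarrow> pt M x = y"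
proof -
  assume pm: "perfect_matching n M" and xy: "{x,y} \<in> M"
  then have "{x,y} \<in> all_edges n" using pm_sub by blast
  then have "x < n" unfolding all_edges_def by blast
  then show ?thesis unfolding pt_def by (rule the1_equality[OF partner_ex[OF pm] xy])
qed

lemma pt_lt: "perfect_matching n M \<Longrightarrow> x < n \<Longrightarrow> pt M x < n"
proof -
  assume a: "perfect_matching n M" "x < n"
  have "{x, pt M x} \<in> all_edges n" using pt_mem[OF a] pm_sub[OF a(1)] by blast
  then have "{x, pt M x} \<subseteq> {..<n}" unfolding all_edges_def by simp
  then show ?thesis by simp
qed

lemma pt_inv: "perfect_matching n M \<Longrightarrow> x < n \<Longrightarrow> pt M (pt M x) = x"
proof -
  assume a: "perfect_matching n M" "x < n"
  have "{pt M x, x} = {x, pt M x}" by (rule insert_commute)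
  then have "{pt M x, x} \<in> M" using pt_mem[OF a] by simp
  then show ?thesis by (rule pt_eq[OF a(1)])
qed

lemma pt_inj: assumes pm: "perfect_matching n M" shows "inj_on (pt M) {..<n}"
proof (rule inj_onI)
  fix x y assume xy: "x \<in> {..<n}" "y \<in> {..<n}" and e: "pt M x = pt M y"
  have "x = pt M (pt M x)" using pt_inv[OF pm] xy(1) by (simp only: lessThan_iff)
  also have "\<dots> = pt M (pt M y)" using e by (simp only:)
  also have "\<dots> = y" using pt_inv[OF pm] xy(2) by (simp only: lessThan_iff)
  finally show "x = y" .
qed

definition prs :: "nat set set \<Rightarrow> nat set \<Rightarrow> nat set \<Rightarrow> (nat\<times>nat) set" where
  "prs G A B = {(u,v). u\<in>A \<and> v\<in>B \<and> {u,v}\<in>G}"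

lemma e_G_prs: "e_G G A B = card (prs G A B)" unfolding e_G_def prs_def by simp

definition Qs :: "nat set set \<Rightarrow> (nat set \<Rightarrow> nat) \<Rightarrow> nat set \<Rightarrow> nat set \<Rightarrow> nat \<Rightarrow> nat \<Rightarrow> (nat\<times>nat) set" where
  "Qs G \<phi> A B a b = {(x,y). x\<notin>A \<and> x\<notin>B \<and> y\<notin>A \<and> y\<notin>B \<and> good G \<phi> a b x y}"

lemma col_facts:
  assumes "(G,\<phi>) \<in> col_graphs n D"
  shows "G \<subseteq> all_edges n" "\<forall>v\<in>{..<n}. degree G v = card D" "\<forall>e\<in>G. \<phi> e \<in> D"
    "\<forall>e. e \<notin> G \<longrightarrow> \<phi> e = 0" "\<forall>d\<in>D. perfect_matching n {e\<in>G. \<phi> e = d}"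
  using assms unfolding col_graphs_def by auto

lemma edge_neq: "G \<subseteq> all_edges n \<Longrightarrow> {u,v} \<in> G \<Longrightarrow> u \<noteq> v \<and> u < n \<and> v < n"
proof -
  assume "G \<subseteq> all_edges n" "{u,v} \<in> G"
  then have "{u,v} \<in> all_edges n" by blast
  then have "card {u,v} = 2" "{u,v} \<subseteq> {..<n}" unfolding all_edges_def by auto
  then show ?thesis by (auto split: if_splits)
qed

lemma card_pre_le:
  assumes pm: "perfect_matching n M" and fT: "finite T"
  shows "card {x\<in>{..<n}. pt M x \<in> T} \<le> card T"
proof (rule card_inj_on_le[OF _ _ fT])
  show "inj_on (pt M) {x\<in>{..<n}. pt M x \<in> T}" using pt_inj[OF pm] by (rule inj_on_subset) auto
qed auto

lemma Qs_card:
  assumes X: "(G,\<phi>) \<in> col_graphs n D" and AB: "A \<subseteq> {..<n}" "B \<subseteq> {..<n}"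
    and cA: "card A = card D" and cB: "card B = card D" and ab: "(a,b) \<in> prs G A B"
  shows "n - 6 * card D \<le> card (Qs G \<phi> A B a b)"
proof -
  note F = col_facts[OF X]
  let ?d = "card D"
  let ?c = "\<phi> {a,b}"
  let ?M = "{e\<in>G. \<phi> e = ?c}"
  let ?p = "pt ?M"
  have abG: "{a,b} \<in> G" and aA: "a \<in> A" and bB: "b \<in> B" using ab unfolding prs_def by auto
  have an: "a < n" and bn: "b < n" and anb: "a \<noteq> b" using edge_neq[OF F(1) abG] by auto
  have cD: "?c \<in> D" using F(3) abG by blast
  have pm: "perfect_matching n ?M" using F(5) cD by blast
  have MG: "?M \<subseteq> G" by blast
  let ?S = "{x\<in>{..<n}. x \<notin> A \<union> B \<and> ?p x \<notin> A \<union> B \<and> {a,x}\<notin>G \<and> {b,?p x}\<notin>G}"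
  have fin: "finite A" "finite B" using AB finite_subset by blast+
  have sub: "(\<lambda>x. (x, ?p x)) ` ?S \<subseteq> Qs G \<phi> A B a b"
  proof
    fix z assume "z \<in> (\<lambda>x. (x, ?p x)) ` ?S"
    then obtain x where z: "z = (x, ?p x)" and xS: "x \<in> ?S" by blast
    have xn: "x < n" using xS by blast
    have xpM: "{x, ?p x} \<in> ?M" by (rule pt_mem[OF pm xn])
    then have xpG: "{x, ?p x} \<in> G" and col: "\<phi> {x, ?p x} = ?c" by blast+
    have "x \<noteq> ?p x" using edge_neq[OF F(1) xpG] by blast
    moreover have "a \<noteq> x" "a \<noteq> ?p x" "b \<noteq> x" "b \<noteq> ?p x" using xS aA bB by auto
    ultimately have "distinct [a,b,x,?p x]" using anb by simp
    then have "good G \<phi> a b x (?p x)" unfolding good_def using abG xpG col xS by blast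
    then show "z \<in> Qs G \<phi> A B a b" unfolding Qs_def z using xS by blast
  qed
  have finQ: "finite (Qs G \<phi> A B a b)"
  proof (rule finite_subset[of _ "{..<n} \<times> {..<n}"])
    show "Qs G \<phi> A B a b \<subseteq> {..<n} \<times> {..<n}"
    proof
      fix z assume "z \<in> Qs G \<phi> A B a b"
      then obtain x y where "z = (x,y)" "{x,y} \<in> G" unfolding Qs_def good_def by blast
      then show "z \<in> {..<n} \<times> {..<n}" using edge_neq[OF F(1)] by blast
    qed
  qed simp
  have inj: "inj_on (\<lambda>x. (x, ?p x)) ?S" by (rule inj_onI) simp
  have c1: "card ?S \<le> card (Qs G \<phi> A B a b)"
    using card_mono[OF finQ sub] card_image[OF inj] by simp
  let ?Na = "{x. {a,x}\<in>G}" and ?Nb = "{x. {b,x}\<in>G}"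
  have finN: "finite ?Na" "finite ?Nb"
    by (rule finite_subset[of _ "{..<n}"], use edge_neq[OF F(1)] in blast, simp)+
  have cNa: "card ?Na = ?d" using nbr_card[OF F(1), of a] F(2) an unfolding degree_def by simp
  have cNb: "card ?Nb = ?d" using nbr_card[OF F(1), of b] F(2) bn unfolding degree_def by simp
  have cAB: "card (A \<union> B) \<le> 2 * ?d" using card_Un_le[of A B] cA cB by simp
  have cP1: "card {x\<in>{..<n}. ?p x \<in> A \<union> B} \<le> 2 * ?d"
    using card_pre_le[OF pm, of "A \<union> B"] fin cAB by simp
  have cP2: "card {x\<in>{..<n}. ?p x \<in> ?Nb} \<le> ?d"
    using card_pre_le[OF pm finN(2)] cNb by simp
  have cover: "{..<n} \<subseteq> ?S \<union> (A \<union> B) \<union> {x\<in>{..<n}. ?p x \<in> A \<union> B} \<union> ?Na \<union> {x\<in>{..<n}. ?p x \<in> ?Nb}"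
    by blast
  have "n \<le> card (?S \<union> (A \<union> B) \<union> {x\<in>{..<n}. ?p x \<in> A \<union> B} \<union> ?Na \<union> {x\<in>{..<n}. ?p x \<in> ?Nb})"
    using card_mono[OF _ cover] fin finN by simp
  also have "\<dots> \<le> card ?S + card (A \<union> B) + card {x\<in>{..<n}. ?p x \<in> A \<union> B} + card ?Na + card {x\<in>{..<n}. ?p x \<in> ?Nb}"
    by (smt (verit) add_le_mono card_Un_le le_trans order_refl)
  finally have "n \<le> card ?S + 6 * ?d" using cAB cP1 cNa cP2 by linarith
  then show ?thesis using c1 by linarith
qed


definition fwd :: "nat set \<Rightarrow> nat set \<Rightarrow> (nat set set \<times> (nat set \<Rightarrow> nat)) \<Rightarrow> (nat\<times>nat\<times>nat\<times>nat) set" where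
  "fwd A B X = {(a,b,x,y). (a,b) \<in> prs (fst X) A B \<and> (x,y) \<in> Qs (fst X) (snd X) A B a b}"

lemma prs_fin: "finite A \<Longrightarrow> finite B \<Longrightarrow> finite (prs G A B)"
  by (rule finite_subset[of _ "A \<times> B"]) (auto simp: prs_def)

lemma fwd_card:
  assumes X: "X \<in> col_graphs n D" and AB: "A \<subseteq> {..<n}" "B \<subseteq> {..<n}"
    and cA: "card A = card D" and cB: "card B = card D"
  shows "e_G (fst X) A B * (n - 6 * card D) \<le> card (fwd A B X)"
proof -
  obtain G \<phi> where Xe: "X = (G,\<phi>)" by (cases X)
  have X': "(G,\<phi>) \<in> col_graphs n D" using X Xe by simp
  have fin: "finite A" "finite B" using AB finite_subset by blast+
  have finQ: "finite (Qs G \<phi> A B a b)" for a b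
    by (rule finite_subset[of _ "{..<n} \<times> {..<n}"])
       (auto simp: Qs_def good_def dest: edge_neq[OF col_facts(1)[OF X']])
  let ?Sig = "SIGMA p:prs G A B. Qs G \<phi> A B (fst p) (snd p)"
  have eq: "fwd A B X = (\<lambda>(p,q). (fst p, snd p, fst q, snd q)) ` ?Sig"
    unfolding fwd_def Xe by force
  have inj: "inj_on (\<lambda>(p,q). (fst p, snd p, fst q, snd q)) ?Sig"
    by (rule inj_onI) auto
  have "card (fwd A B X) = card ?Sig" unfolding eq by (rule card_image[OF inj])
  also have "\<dots> = (\<Sum>p\<in>prs G A B. card (Qs G \<phi> A B (fst p) (snd p)))"
    by (rule card_SigmaI) (use prs_fin[OF fin] finQ in auto)
  also have "\<dots> \<ge> card (prs G A B) * (n - 6 * card D)"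
  proof -
    have "\<forall>p\<in>prs G A B. n - 6 * card D \<le> card (Qs G \<phi> A B (fst p) (snd p))"
      using Qs_card[OF X' AB cA cB] by auto
    then show ?thesis using sum_bounded_below[of "prs G A B" "n - 6 * card D"] by simp
  qed
  finally have "card (prs G A B) * (n - 6 * card D) \<le> card (fwd A B X)" .
  then show ?thesis by (simp add: e_G_prs Xe)
qed

lemma sw_prs:
  assumes g: "good G \<phi> a b x y" and x: "x \<notin> A" "x \<notin> B" and y: "y \<notin> A" "y \<notin> B"
  shows "prs (swG G a b x y) A B = prs G A B - {(a,b),(b,a)}"
proof (rule set_eqI)
  fix z :: "nat \<times> nat"
  obtain u v where z: "z = (u,v)" by (cases z)
  have "(u,v) \<in> prs (swG G a b x y) A B \<longleftrightarrow> (u,v) \<in> prs G A B - {(a,b),(b,a)}"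
  proof (cases "u\<in>A \<and> v\<in>B")
    case True
    then have n1: "{u,v} \<noteq> {a,x}" "{u,v}\<noteq>{b,y}" "{u,v}\<noteq>{x,y}" using x y by (auto simp: doubleton_eq_iff)
    have e2: "{u,v} = {a,b} \<longleftrightarrow> (u,v) = (a,b) \<or> (u,v) = (b,a)" by (auto simp: doubleton_eq_iff)
    show ?thesis unfolding prs_def swG_mem using True n1 e2 by auto
  next
    case False then show ?thesis by (auto simp: prs_def)
  qed
  then show "z \<in> prs (swG G a b x y) A B \<longleftrightarrow> z \<in> prs G A B - {(a,b),(b,a)}" unfolding z .
qed

lemma sw_eG:
  assumes g: "good G \<phi> a b x y" and ab: "(a,b) \<in> prs G A B"
    and x: "x \<notin> A" "x \<notin> B" and y: "y \<notin> A" "y \<notin> B" and fin: "finite A" "finite B"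
  shows "e_G (swG G a b x y) A B + 1 = e_G G A B \<or> e_G (swG G a b x y) A B + 2 = e_G G A B"
proof -
  let ?P = "prs G A B"
  have fP: "finite ?P" by (rule prs_fin[OF fin])
  have anb: "a \<noteq> b" using g unfolding good_def by auto
  have e: "card (prs (swG G a b x y) A B) = card (?P - {(a,b),(b,a)})"
    unfolding sw_prs[OF g x y] ..
  show ?thesis
  proof (cases "(b,a) \<in> ?P")
    case True
    have "card (?P - {(a,b),(b,a)}) = card ?P - 2"
      using card_Diff_subset[of "{(a,b),(b,a)}" ?P] True ab anb by auto
    moreover have "card ?P \<ge> 2"
      using card_mono[OF fP, of "{(a,b),(b,a)}"] True ab anb by auto
    ultimately show ?thesis unfolding e_G_prs e by arith
  next
    case False
    have "?P - {(a,b),(b,a)} = ?P - {(a,b)}" using False by auto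
    then have "card (?P - {(a,b),(b,a)}) = card ?P - 1" using ab fP by (simp add: card_Diff_singleton)
    moreover have "?P \<noteq> {}" using ab by blast
    then have "card ?P \<ge> 1" using fP by (simp add: Suc_le_eq card_gt_0_iff)
    ultimately show ?thesis unfolding e_G_prs e by arith
  qed
qed


lemma col_fin: assumes "finite D" shows "finite (col_graphs n D)"
proof (rule finite_subset)
  show "col_graphs n D \<subseteq> Pow (all_edges n) \<times> {f. \<forall>x. (x \<in> all_edges n \<longrightarrow> f x \<in> D \<union> {0}) \<and> (x \<notin> all_edges n \<longrightarrow> f x = 0)}"
  proof
    fix X assume X: "X \<in> col_graphs n D"
    obtain G \<phi> where Xe: "X = (G,\<phi>)" by (cases X)
    note F = col_facts[OF X[unfolded Xe]]
    have "G \<in> Pow (all_edges n)" using F(1) by blast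
    moreover have "\<forall>x. (x \<in> all_edges n \<longrightarrow> \<phi> x \<in> D \<union> {0}) \<and> (x \<notin> all_edges n \<longrightarrow> \<phi> x = 0)"
      using F(1,3,4) by blast
    ultimately show "X \<in> Pow (all_edges n) \<times> {f. \<forall>x. (x \<in> all_edges n \<longrightarrow> f x \<in> D \<union> {0}) \<and> (x \<notin> all_edges n \<longrightarrow> f x = 0)}"
      unfolding Xe by blast
  qed
  show "finite (Pow (all_edges n) \<times> {f. \<forall>x. (x \<in> all_edges n \<longrightarrow> f x \<in> D \<union> {0}) \<and> (x \<notin> all_edges n \<longrightarrow> f x = 0)})"
    using finite_all_edges assms by (intro finite_cartesian_product finite_set_of_finite_funs) auto
qed

lemma swG_inv: assumes "good G \<phi> a b x y"
  shows "G = insert {a,b} (insert {x,y} (swG G a b x y - {{a,x},{b,y}}))"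
proof -
  from assms have ab: "{a,b}\<in>G" and xy: "{x,y}\<in>G" and ax: "{a,x}\<notin>G"
    and by': "{b,y}\<notin>G" unfolding good_def by auto
  show ?thesis unfolding swG_def using ab xy ax by' by blast
qed

lemma swP_inv: assumes g: "good G \<phi> a b x y" and z: "\<phi> {a,x} = 0" "\<phi> {b,y} = 0"
  shows "\<phi> = (swP \<phi> a b x y)({a,x}:=0, {b,y}:=0, {a,b}:=\<phi> {a,b}, {x,y}:=\<phi> {a,b})"
proof
  fix e
  from g have dist: "distinct [a,b,x,y]" and cxy: "\<phi> {x,y} = \<phi> {a,b}" unfolding good_def by auto
  have neq: "{a,x} \<noteq> {b,y}" "{a,x} \<noteq> {a,b}" "{a,x} \<noteq> {x,y}" "{b,y} \<noteq> {a,b}" "{b,y} \<noteq> {x,y}" "{a,b} \<noteq> {x,y}"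
    using dist by (auto simp: doubleton_eq_iff)
  show "\<phi> e = ((swP \<phi> a b x y)({a,x}:=0, {b,y}:=0, {a,b}:=\<phi> {a,b}, {x,y}:=\<phi> {a,b})) e"
    unfolding fun_upd_apply swP_alt[OF dist] using neq z cxy by auto
qed

definition swt :: "(nat set set \<times> (nat set \<Rightarrow> nat)) \<Rightarrow> nat\<times>nat\<times>nat\<times>nat \<Rightarrow> (nat set set \<times> (nat set \<Rightarrow> nat))" where
  "swt X t = (case t of (a,b,x,y) \<Rightarrow> (swG (fst X) a b x y, swP (snd X) a b x y))"

definition hmap :: "(nat set set \<times> (nat set \<Rightarrow> nat)) \<times> (nat\<times>nat\<times>nat\<times>nat) \<Rightarrow> (nat set set \<times> (nat set \<Rightarrow> nat)) \<times> nat \<times> nat \<times> nat" where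
  "hmap p = (swt (fst p) (snd p), fst (snd p), fst (snd (snd p)), snd (fst p) {fst (snd p), fst (snd (snd p))})"

lemma fwd_mem:
  assumes "(a,b,x,y) \<in> fwd A B (G,\<phi>)"
  shows "a \<in> A" "b \<in> B" "x \<notin> A" "x \<notin> B" "y \<notin> A" "y \<notin> B" "good G \<phi> a b x y" "(a,b) \<in> prs G A B"
  using assms unfolding fwd_def Qs_def prs_def by auto

lemma hmap_inj:
  assumes D: "finite D"
  shows "inj_on hmap (Sigma (col_graphs n D) (fwd A B))"
proof (rule inj_onI)
  fix p1 p2 assume p1: "p1 \<in> Sigma (col_graphs n D) (fwd A B)" and p2: "p2 \<in> Sigma (col_graphs n D) (fwd A B)"
    and h: "hmap p1 = hmap p2"
  obtain G1 \<phi>1 a1 b1 x1 y1 where e1: "p1 = ((G1,\<phi>1),(a1,b1,x1,y1))" by (metis prod.exhaust)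
  obtain G2 \<phi>2 a2 b2 x2 y2 where e2: "p2 = ((G2,\<phi>2),(a2,b2,x2,y2))" by (metis prod.exhaust)
  have X1: "(G1,\<phi>1) \<in> col_graphs n D" and t1: "(a1,b1,x1,y1) \<in> fwd A B (G1,\<phi>1)" using p1 e1 by auto
  have X2: "(G2,\<phi>2) \<in> col_graphs n D" and t2: "(a2,b2,x2,y2) \<in> fwd A B (G2,\<phi>2)" using p2 e2 by auto
  have g1: "good G1 \<phi>1 a1 b1 x1 y1" using fwd_mem[OF t1] by blast
  have g2: "good G2 \<phi>2 a2 b2 x2 y2" using fwd_mem[OF t2] by blast
  have hh: "swG G1 a1 b1 x1 y1 = swG G2 a2 b2 x2 y2" "swP \<phi>1 a1 b1 x1 y1 = swP \<phi>2 a2 b2 x2 y2"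
     "a1 = a2" "b1 = b2" "\<phi>1 {a1,b1} = \<phi>2 {a2,b2}"
    using h unfolding e1 e2 hmap_def swt_def by auto
  define a where "a = a1"
  define b where "b = b1"
  define c where "c = \<phi>1 {a1,b1}"
  define G' where "G' = swG G1 a1 b1 x1 y1"
  define \<phi>' where "\<phi>' = swP \<phi>1 a1 b1 x1 y1"
  have Y: "(G',\<phi>') \<in> col_graphs n D" unfolding G'_def \<phi>'_def by (rule sw_col[OF X1 g1])
  have cD: "c \<in> D" using col_facts(3)[OF X1] g1 unfolding c_def good_def by auto
  let ?M = "{e\<in>G'. \<phi>' e = c}"
  have pm: "perfect_matching n ?M" using col_facts(5)[OF Y] cD by blast
  have d1: "distinct [a1,b1,x1,y1]" using g1 unfolding good_def by auto
  have d2: "distinct [a2,b2,x2,y2]" using g2 unfolding good_def by auto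
  have m1: "{a,x1} \<in> ?M" "{b,y1} \<in> ?M"
    unfolding a_def b_def G'_def \<phi>'_def c_def swP_alt[OF d1] by (auto simp: swG_def)
  have r: "G' = swG G2 a2 b2 x2 y2" "\<phi>' = swP \<phi>2 a2 b2 x2 y2" "a = a2" "b = b2" "c = \<phi>2 {a2,b2}"
    unfolding a_def b_def G'_def \<phi>'_def c_def using hh by simp_all
  have m2': "{a2,x2} \<in> {e\<in>swG G2 a2 b2 x2 y2. swP \<phi>2 a2 b2 x2 y2 e = \<phi>2 {a2,b2}}"
     "{b2,y2} \<in> {e\<in>swG G2 a2 b2 x2 y2. swP \<phi>2 a2 b2 x2 y2 e = \<phi>2 {a2,b2}}"
    unfolding swP_alt[OF d2] by (auto simp: swG_def)
  have m2: "{a,x2} \<in> ?M" "{b,y2} \<in> ?M" using m2' unfolding r .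
  have x: "x1 = x2" using pt_eq[OF pm m1(1)] pt_eq[OF pm m2(1)] by simp
  have y: "y1 = y2" using pt_eq[OF pm m1(2)] pt_eq[OF pm m2(2)] by simp
  have G: "G1 = G2" using swG_inv[OF g1] swG_inv[OF g2] hh x y by metis
  have z1: "\<phi>1 {a1,x1} = 0" "\<phi>1 {b1,y1} = 0" using col_facts(4)[OF X1] g1 unfolding good_def by auto
  have z2: "\<phi>2 {a2,x2} = 0" "\<phi>2 {b2,y2} = 0" using col_facts(4)[OF X2] g2 unfolding good_def by auto
  have P: "\<phi>1 = \<phi>2" using swP_inv[OF g1 z1] swP_inv[OF g2 z2] hh x y by metis
  show "p1 = p2" unfolding e1 e2 using G P x y hh by simp
qed


lemma fwd_fin: assumes "X \<in> col_graphs n D" shows "finite (fwd A B X)"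
proof -
  obtain G \<phi> where Xe: "X = (G,\<phi>)" by (cases X)
  note F = col_facts[OF assms[unfolded Xe]]
  have "fwd A B X \<subseteq> {..<n} \<times> {..<n} \<times> {..<n} \<times> {..<n}"
  proof
    fix z assume z: "z \<in> fwd A B X"
    obtain a b x y where ze: "z = (a,b,x,y)" by (metis prod.exhaust)
    have g: "good G \<phi> a b x y" using fwd_mem[of a b x y A B G \<phi>] z ze Xe by simp
    then have "{a,b} \<in> G" "{x,y} \<in> G" unfolding good_def by auto
    then show "z \<in> {..<n} \<times> {..<n} \<times> {..<n} \<times> {..<n}" using edge_neq[OF F(1)] ze by blast
  qed
  then show ?thesis by (rule finite_subset) simp
qed

lemma switch_ineq:
  assumes D: "finite D" and AB: "A \<subseteq> {..<n}" "B \<subseteq> {..<n}" and cA: "card A = card D" and cB: "card B = card D"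
  shows "card {X\<in>col_graphs n D. e_G (fst X) A B = k} * (k * (n - 6*card D))
     \<le> card {Y\<in>col_graphs n D. e_G (fst Y) A B + 1 = k \<or> e_G (fst Y) A B + 2 = k} * (card D * (card D * card D))"
proof -
  let ?C = "col_graphs n D"
  let ?Ck = "{X\<in>?C. e_G (fst X) A B = k}"
  let ?Cm = "{Y\<in>?C. e_G (fst Y) A B + 1 = k \<or> e_G (fst Y) A B + 2 = k}"
  let ?R = "Sigma ?Ck (fwd A B)"
  have finC: "finite ?C" by (rule col_fin[OF D])
  have fin: "finite A" "finite B" using AB finite_subset by blast+
  have finCk: "finite ?Ck" using finC by simp
  have finCm: "finite ?Cm" using finC by simp
  have "card ?R = (\<Sum>X\<in>?Ck. card (fwd A B X))"
    by (rule card_SigmaI) (use finCk fwd_fin in auto)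
  also have "\<dots> \<ge> card ?Ck * (k * (n - 6*card D))"
  proof -
    have "\<And>X. X\<in>?Ck \<Longrightarrow> k * (n - 6*card D) \<le> card (fwd A B X)"
      using fwd_card[OF _ AB cA cB] by auto
    then have "of_nat (card ?Ck) * (k * (n - 6*card D)) \<le> (\<Sum>X\<in>?Ck. card (fwd A B X))"
      by (rule sum_bounded_below)
    then show ?thesis by (simp only: of_nat_id)
  qed
  finally have c1: "card ?Ck * (k * (n - 6*card D)) \<le> card ?R" .
  have inj: "inj_on hmap ?R" by (rule inj_on_subset[OF hmap_inj[OF D]]) auto
  have sub: "hmap ` ?R \<subseteq> ?Cm \<times> A \<times> B \<times> D"
  proof
    fix z assume "z \<in> hmap ` ?R"
    then obtain p where p: "p \<in> ?R" and z: "z = hmap p" by blast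
    obtain G \<phi> a b x y where pe: "p = ((G,\<phi>),(a,b,x,y))" by (metis prod.exhaust)
    have X: "(G,\<phi>) \<in> ?C" and ek: "e_G G A B = k" and t: "(a,b,x,y) \<in> fwd A B (G,\<phi>)" using p pe by auto
    note fm = fwd_mem[OF t]
    have Y: "(swG G a b x y, swP \<phi> a b x y) \<in> ?C" by (rule sw_col[OF X fm(7)])
    have e: "e_G (swG G a b x y) A B + 1 = k \<or> e_G (swG G a b x y) A B + 2 = k"
      using sw_eG[OF fm(7) fm(8) fm(3) fm(4) fm(5) fm(6) fin] ek by simp
    have cD: "\<phi> {a,b} \<in> D" using col_facts(3)[OF X] fm(7) unfolding good_def by auto
    show "z \<in> ?Cm \<times> A \<times> B \<times> D" unfolding z pe hmap_def swt_def
      using Y e fm(1) fm(2) cD by simp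
  qed
  have "card ?R = card (hmap ` ?R)" using card_image[OF inj] by simp
  also have "\<dots> \<le> card (?Cm \<times> A \<times> B \<times> D)"
    by (rule card_mono[OF _ sub]) (use finCm fin D in simp)
  also have "\<dots> = card ?Cm * (card D * (card D * card D))"
    using cA cB by (simp add: card_cartesian_product)
  finally show ?thesis using c1 by linarith
qed


lemma geom_sum: "K \<le> N + 1 \<Longrightarrow> (\<Sum>k\<in>{K..N}. (1/2::real)^(k+1)) = (1/2)^K - (1/2)^(N+1)"
proof (induction N)
  case 0
  then show ?case by (cases K) auto
next
  case (Suc N)
  show ?case
  proof (cases "K = Suc N + 1")
    case True then show ?thesis by simp
  next
    case False
    then have "K \<le> N + 1" using Suc.prems by simp
    then have "{K..Suc N} = insert (Suc N) {K..N}" by auto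
    then have "(\<Sum>k\<in>{K..Suc N}. (1/2::real)^(k+1)) = (1/2)^(Suc N + 1) + (\<Sum>k\<in>{K..N}. (1/2::real)^(k+1))"
      by simp
    also have "\<dots> = (1/2)^(Suc N + 1) + ((1/2)^K - (1/2)^(N+1))" using Suc.IH[OF \<open>K \<le> N + 1\<close>] by simp
    also have "\<dots> = (1/2)^K - (1/2)^(Suc N + 1)" by simp
    finally show ?thesis .
  qed
qed

lemma geom_le: "(\<Sum>k\<in>{K..N}. (1/2::real)^(k+1)) \<le> (1/2)^K"
proof (cases "K \<le> N + 1")
  case True then show ?thesis using geom_sum by simp
next
  case False then have "{K..N} = {}" by auto
  then show ?thesis by simp
qed

lemma rec_bound:
  fixes M :: "nat \<Rightarrow> nat"
  assumes le: "\<And>k. M k \<le> T" and rec: "\<And>k. k0 \<le> k \<Longrightarrow> 6 * M k \<le> M (k-1) + M (k-2)" and k0: "2 \<le> k0"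
  shows "k0 \<le> k + 2 \<Longrightarrow> M k * 2^(k+1) \<le> T * 2^k0"
proof (induction k rule: less_induct)
  case (less k)
  show ?case
  proof (cases "k0 \<le> k")
    case False
    then have "k + 1 \<le> k0" by simp
    then have "(2::nat)^(k+1) \<le> 2^k0" by (rule power_increasing) simp
    then show ?thesis using le[of k] by (simp add: mult_le_mono)
  next
    case True
    have i1: "M (k-1) * 2^(k-1+1) \<le> T * 2^k0" using less.IH[of "k-1"] True k0 by simp
    have i2: "M (k-2) * 2^(k-2+1) \<le> T * 2^k0" using less.IH[of "k-2"] True k0 by simp
    have e1: "(2::nat)^(k-1+1) = 2^k" using True k0 by simp
    have kk: "k = Suc (k-2+1)" using True k0 by simp
    have e2: "(2::nat)^k = 2 * 2^(k-2+1)" by (subst kk) (simp only: power_Suc)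
    have "6 * M k * 2^k \<le> (M (k-1) + M (k-2)) * 2^k" using rec[OF True] by simp
    also have "\<dots> = M (k-1) * 2^k + M (k-2) * 2^k" by (rule add_mult_distrib)
    also have "\<dots> = M (k-1) * 2^(k-1+1) + 2 * (M (k-2) * 2^(k-2+1))" unfolding e1 e2 by simp
    also have "\<dots> \<le> 3 * (T * 2^k0)" using i1 i2 by linarith
    finally have "6 * M k * 2^k \<le> 3 * (T * 2^k0)" .
    then show ?thesis by simp
  qed
qed

lemma eG_le: "A \<subseteq> {..<n} \<Longrightarrow> B \<subseteq> {..<n} \<Longrightarrow> e_G G A B \<le> card A * card B"
proof -
  assume AB: "A \<subseteq> {..<n}" "B \<subseteq> {..<n}"
  have fin: "finite A" "finite B" using AB finite_subset by blast+
  have "prs G A B \<subseteq> A \<times> B" unfolding prs_def by auto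
  then have "card (prs G A B) \<le> card (A \<times> B)" using fin by (intro card_mono) auto
  then show ?thesis by (simp add: e_G_prs card_cartesian_product)
qed

lemma tail_AB:
  assumes D: "finite D" and AB: "A \<subseteq> {..<n}" "B \<subseteq> {..<n}" and cA: "card A = card D" and cB: "card B = card D"
    and dpos: "0 < card D" and k0: "2 \<le> k0" and hk0: "\<And>k. k0 \<le> k \<Longrightarrow> 6 * card D ^ 3 \<le> k * (n - 6 * card D)"
    and K: "k0 \<le> K"
  shows "real (card {X\<in>col_graphs n D. K \<le> e_G (fst X) A B}) \<le> real (card (col_graphs n D)) * 2^k0 / 2^K"
proof -
  let ?C = "col_graphs n D"
  let ?d = "card D"
  define M where "M k = card {X\<in>?C. e_G (fst X) A B = k}" for k
  let ?T = "card ?C"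
  have finC: "finite ?C" by (rule col_fin[OF D])
  have le: "M k \<le> ?T" for k unfolding M_def by (rule card_mono[OF finC]) auto
  have rec: "6 * M k \<le> M (k-1) + M (k-2)" if kk: "k0 \<le> k" for k
  proof -
    have sw: "M k * (k * (n - 6*?d)) \<le> card {Y\<in>?C. e_G (fst Y) A B + 1 = k \<or> e_G (fst Y) A B + 2 = k} * (?d * (?d * ?d))"
      unfolding M_def by (rule switch_ineq[OF D AB cA cB])
    have "{Y\<in>?C. e_G (fst Y) A B + 1 = k \<or> e_G (fst Y) A B + 2 = k} \<subseteq> {X\<in>?C. e_G (fst X) A B = k-1} \<union> {X\<in>?C. e_G (fst X) A B = k-2}"
      by auto
    then have "card {Y\<in>?C. e_G (fst Y) A B + 1 = k \<or> e_G (fst Y) A B + 2 = k} \<le> card ({X\<in>?C. e_G (fst X) A B = k-1} \<union> {X\<in>?C. e_G (fst X) A B = k-2})"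
      using finC by (intro card_mono) auto
    also have "\<dots> \<le> M (k-1) + M (k-2)" unfolding M_def by (rule card_Un_le)
    finally have cm: "card {Y\<in>?C. e_G (fst Y) A B + 1 = k \<or> e_G (fst Y) A B + 2 = k} \<le> M (k-1) + M (k-2)" .
    have "M k * (6 * ?d^3) \<le> M k * (k * (n - 6*?d))" using hk0[OF kk] by simp
    also have "\<dots> \<le> (M (k-1) + M (k-2)) * ?d^3" using sw cm
      by (metis (no_types, lifting) le_trans mult_le_mono1 power3_eq_cube mult.assoc)
    finally have "(6 * M k) * ?d^3 \<le> (M (k-1) + M (k-2)) * ?d^3" by (simp add: algebra_simps)
    then show ?thesis using dpos by simp
  qed
  have rb: "M k * 2^(k+1) \<le> ?T * 2^k0" if "k0 \<le> k + 2" for k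
    using rec_bound[of M ?T k0 k, OF le rec k0 that] by blast
  have seteq: "{X\<in>?C. K \<le> e_G (fst X) A B} = (\<Union>k\<in>{K..?d*?d}. {X\<in>?C. e_G (fst X) A B = k})"
  proof -
    have "e_G (fst X) A B \<le> ?d * ?d" for X using eG_le[OF AB] cA cB by metis
    then show ?thesis by auto
  qed
  have "card {X\<in>?C. K \<le> e_G (fst X) A B} = (\<Sum>k\<in>{K..?d*?d}. M k)"
    unfolding seteq M_def using finC by (intro card_UN_disjoint) auto
  then have "real (card {X\<in>?C. K \<le> e_G (fst X) A B}) = (\<Sum>k\<in>{K..?d*?d}. real (M k))" by simp
  also have "\<dots> \<le> (\<Sum>k\<in>{K..?d*?d}. real ?T * 2^k0 * (1/2)^(k+1))"
  proof (rule sum_mono)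
    fix k assume "k \<in> {K..?d*?d}"
    then have "k0 \<le> k + 2" using K by auto
    then have "real (M k * 2^(k+1)) \<le> real (?T * 2^k0)" using rb by (simp only: of_nat_le_iff)
    then have "real (M k) * 2^(k+1) \<le> real ?T * 2^k0" by simp
    then show "real (M k) \<le> real ?T * 2^k0 * (1/2)^(k+1)"
      by (simp add: field_simps power_one_over)
  qed
  also have "\<dots> = real ?T * 2^k0 * (\<Sum>k\<in>{K..?d*?d}. (1/2::real)^(k+1))" by (simp add: sum_distrib_left)
  also have "\<dots> \<le> real ?T * 2^k0 * (1/2)^K" by (rule mult_left_mono[OF geom_le]) simp
  also have "\<dots> = real ?T * 2^k0 / 2^K" by (simp add: power_one_over)
  finally show ?thesis .
qed


lemma prob_bound:
  assumes D: "finite D" and dpos: "0 < card D" and k0: "2 \<le> k0"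
    and hk0: "\<And>k. k0 \<le> k \<Longrightarrow> 6 * card D ^ 3 \<le> k * (n - 6 * card D)"
    and K: "k0 \<le> K" and Kle: "real K \<le> 8 * (real (card D) - 1) ^ 3 / real n"
    and ne: "col_graphs n D \<noteq> {}"
  shows "prob_quasirandom n D \<ge> 1 - 4^n * 2^k0 / 2^K"
proof -
  let ?C = "col_graphs n D"
  let ?d = "card D"
  let ?T = "card ?C"
  let ?P = "{(A,B). A \<subseteq> {..<n} \<and> B \<subseteq> {..<n} \<and> card A = ?d \<and> card B = ?d}"
  let ?F = "\<lambda>p. {X\<in>?C. K \<le> e_G (fst X) (fst p) (snd p)}"
  have finC: "finite ?C" by (rule col_fin[OF D])
  have Tpos: "0 < ?T" using finC ne by (simp add: card_gt_0_iff)
  have Psub: "?P \<subseteq> Pow {..<n} \<times> Pow {..<n}" by auto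
  have finP: "finite ?P" by (rule finite_subset[OF Psub]) simp
  have cP: "card ?P \<le> 4^n"
  proof -
    have "card ?P \<le> card (Pow {..<n} \<times> Pow {..<n::nat})" by (rule card_mono[OF _ Psub]) simp
    also have "\<dots> = 4^n" by (simp add: card_cartesian_product card_Pow power_mult_distrib[symmetric])
    finally show ?thesis .
  qed
  let ?Bad = "{X\<in>?C. \<not> quasirandom n D (fst X)}"
  have badsub: "?Bad \<subseteq> (\<Union>p\<in>?P. ?F p)"
  proof
    fix X assume X: "X \<in> ?Bad"
    then obtain A B where AB: "A \<subseteq> {..<n}" "B \<subseteq> {..<n}" "card A = ?d" "card B = ?d"
      and e: "\<not> real (e_G (fst X) A B) < 8 * (real ?d - 1) ^ 3 / real n"
      unfolding quasirandom_def by auto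
    have "real K \<le> real (e_G (fst X) A B)" using e Kle by linarith
    then have "K \<le> e_G (fst X) A B" by simp
    then show "X \<in> (\<Union>p\<in>?P. ?F p)" using X AB by (intro UN_I[of "(A,B)"]) auto
  qed
  have finU: "finite (\<Union>p\<in>?P. ?F p)" by (rule finite_subset[of _ ?C]) (auto simp: finC)
  have "real (card ?Bad) \<le> real (card (\<Union>p\<in>?P. ?F p))"
    using card_mono[OF finU badsub] by simp
  also have "\<dots> \<le> real (\<Sum>p\<in>?P. card (?F p))"
  proof -
    have "card (\<Union>p\<in>?P. ?F p) \<le> (\<Sum>p\<in>?P. card (?F p))" by (rule card_UN_le[OF finP])
    then show ?thesis by (simp only: of_nat_le_iff)
  qed
  also have "\<dots> = (\<Sum>p\<in>?P. real (card (?F p)))" by (rule of_nat_sum)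
  also have "\<dots> \<le> (\<Sum>p\<in>?P. real ?T * 2^k0 / 2^K)"
  proof (rule sum_mono)
    fix p assume "p \<in> ?P"
    then obtain A B where p: "p = (A,B)" and AB: "A \<subseteq> {..<n}" "B \<subseteq> {..<n}" "card A = ?d" "card B = ?d" by auto
    show "real (card (?F p)) \<le> real ?T * 2^k0 / 2^K"
      unfolding p using tail_AB[OF D AB dpos k0 hk0 K] by simp
  qed
  also have "\<dots> = real (card ?P) * (real ?T * 2^k0 / 2^K)" by simp
  also have "\<dots> \<le> 4^n * (real ?T * 2^k0 / 2^K)"
    using cP by (intro mult_right_mono) (simp_all add: of_nat_le_iff[symmetric])
  finally have bad: "real (card ?Bad) \<le> 4^n * (real ?T * 2^k0 / 2^K)" .
  have good: "{x \<in> ?C. quasirandom n D (fst x)} = ?C - ?Bad" by auto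
  have "card {x \<in> ?C. quasirandom n D (fst x)} = ?T - card ?Bad"
    unfolding good using finC by (intro card_Diff_subset) auto
  moreover have "card ?Bad \<le> ?T" using finC by (intro card_mono) auto
  ultimately have cg: "real (card {x \<in> ?C. quasirandom n D (fst x)}) = real ?T - real (card ?Bad)" by simp
  have "prob_quasirandom n D = (real ?T - real (card ?Bad)) / real ?T"
    unfolding prob_quasirandom_def cg ..
  also have "\<dots> = 1 - real (card ?Bad) / real ?T" using Tpos by (simp add: field_simps)
  also have "\<dots> \<ge> 1 - 4^n * 2^k0 / 2^K"
  proof -
    have "real (card ?Bad) / real ?T \<le> 4^n * (real ?T * 2^k0 / 2^K) / real ?T"
      using bad Tpos by (intro divide_right_mono) auto
    also have "\<dots> = 4^n * 2^k0 / 2^K" using Tpos by simp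
    finally show ?thesis by simp
  qed
  finally show ?thesis .
qed


lemma mod_lcancel_nat: "((x::nat) + j) mod h = (x + j') mod h \<Longrightarrow> j mod h = j' mod h"
proof -
  assume a: "(x + j) mod h = (x + j') mod h"
  have "int ((x + j) mod h) = int ((x + j') mod h)" using a by simp
  then have "(int x + int j) mod int h = (int x + int j') mod int h" by (simp add: of_nat_mod)
  then have "((int x + int j) - int x) mod int h = ((int x + int j') - int x) mod int h" by (rule mod_diff_cong) simp
  then have "int j mod int h = int j' mod int h" by simp
  then have "int (j mod h) = int (j' mod h)" by (simp add: of_nat_mod)
  then show ?thesis by simp
qed


lemma pm_ex1: "perfect_matching n M \<Longrightarrow> v < n \<Longrightarrow> \<exists>!e. e \<in> M \<and> v \<in> e"
  unfolding perfect_matching_def by simp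

lemma pm_uniq: assumes "perfect_matching n M" "v < n" "e1 \<in> M" "v \<in> e1" "e2 \<in> M" "v \<in> e2"
  shows "e1 = e2"
proof (rule ex1E[OF pm_ex1[OF assms(1,2)]])
  fix e assume "e \<in> M \<and> v \<in> e" and u: "\<forall>y. y \<in> M \<and> v \<in> y \<longrightarrow> y = e"
  have "e1 = e" using u assms(3,4) by blast
  moreover have "e2 = e" using u assms(5,6) by blast
  ultimately show "e1 = e2" by simp
qed

lemma pm_ex: assumes "perfect_matching n M" "v < n" obtains e where "e \<in> M" "v \<in> e"
  using ex1_implies_ex[OF pm_ex1[OF assms]] by blast

lemma deg_from_pm:
  assumes GE: "G \<subseteq> all_edges n" and col: "\<forall>e\<in>G. \<phi> e \<in> D"
    and pm: "\<forall>c\<in>D. perfect_matching n {e\<in>G. \<phi> e = c}" and v: "v < n"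
  shows "degree G v = card D"
proof -
  have "bij_betw \<phi> {e\<in>G. v\<in>e} D"
  proof (rule bij_betwI')
    fix e1 e2 assume e1: "e1 \<in> {e\<in>G. v\<in>e}" and e2: "e2 \<in> {e\<in>G. v\<in>e}"
    show "(\<phi> e1 = \<phi> e2) = (e1 = e2)"
    proof
      assume eq: "\<phi> e1 = \<phi> e2"
      have "\<phi> e1 \<in> D" using col e1 by blast
      then have p: "perfect_matching n {e\<in>G. \<phi> e = \<phi> e1}" using pm by blast
      have "e1 \<in> {e\<in>G. \<phi> e = \<phi> e1}" "e2 \<in> {e\<in>G. \<phi> e = \<phi> e1}" using e1 e2 eq by auto
      then show "e1 = e2" using pm_uniq[OF p v] e1 e2 by blast
    qed simp
  next
    fix e assume "e \<in> {e\<in>G. v\<in>e}" then show "\<phi> e \<in> D" using col by blast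
  next
    fix c assume c: "c \<in> D"
    then have p: "perfect_matching n {e\<in>G. \<phi> e = c}" using pm by blast
    obtain e where "e \<in> {e\<in>G. \<phi> e = c}" "v \<in> e" by (rule pm_ex[OF p v])
    then show "\<exists>e\<in>{e\<in>G. v\<in>e}. c = \<phi> e" by blast
  qed
  then show ?thesis unfolding degree_def by (rule bij_betw_same_card)
qed

definition ed :: "nat \<Rightarrow> nat \<Rightarrow> nat \<Rightarrow> nat set" where "ed h x j = {x, h + (x + j) mod h}"

lemma ed_inj:
  assumes "x < h" "x' < h" "j < h" "j' < h" "ed h x j = ed h x' j'"
  shows "x = x' \<and> j = j'"
proof -
  have hy: "x' \<noteq> h + (x + j) mod h" "x \<noteq> h + (x' + j') mod h" using assms(1,2) by auto
  have "{x, h + (x + j) mod h} = {x', h + (x' + j') mod h}" using assms(5) unfolding ed_def .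
  then have "x = x' \<and> h + (x + j) mod h = h + (x' + j') mod h"
    using hy by (simp only: doubleton_eq_iff) blast
  then have xx: "x = x'" and m: "(x + j) mod h = (x + j') mod h" by auto
  from m have "j mod h = j' mod h" by (rule mod_lcancel_nat)
  then have "j = j'" using assms(3,4) by simp
  then show ?thesis using xx by simp
qed

lemma ed_edge: assumes "x < h" "n = 2 * h" shows "ed h x j \<in> all_edges n"
proof -
  have "0 < h" using assms by simp
  then have "(x + j) mod h < h" by simp
  define y where "y = h + (x + j) mod h"
  have y: "y < n" "x < n" "x \<noteq> y" using assms \<open>(x + j) mod h < h\<close> unfolding y_def by linarith+
  have "{x,y} \<subseteq> {..<n}" "card {x,y} = 2" using y by auto
  then show ?thesis unfolding ed_def all_edges_def y_def[symmetric] by blast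
qed

lemma mem_ed: "v \<in> ed h x j \<longleftrightarrow> v = x \<or> v = h + (x + j) mod h"
  unfolding ed_def by simp

lemma ed_pm:
  assumes n: "n = 2 * h" and j: "j < h"
  shows "perfect_matching n {ed h x j | x. x < h}"
proof -
  have h0: "0 < h" using j by simp
  have sub: "{ed h x j | x. x < h} \<subseteq> all_edges n" using ed_edge[OF _ n] by blast
  have ex1v: "\<exists>!e. e \<in> {ed h x j | x. x < h} \<and> v \<in> e" if v: "v < n" for v
  proof (cases "v < h")
    case True
    have ex: "ed h v j \<in> {ed h x j | x. x < h} \<and> v \<in> ed h v j" using True mem_ed by blast
    have U: "e = ed h v j" if H1: "e \<in> {ed h x j | x. x < h} \<and> v \<in> e" for e
    proof -
      obtain x where x: "x < h" "e = ed h x j" using H1 by blast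
      have "v \<noteq> h + (x + j) mod h" using True by simp
      then have "v = x" using H1 x mem_ed by blast
      then show ?thesis using x by simp
    qed
    show ?thesis by (rule ex1I[of _ "ed h v j"]) (rule ex, rule U)
  next
    case False
    define w where "w = v - h"
    have w: "w < h" "v = h + w" using False v n unfolding w_def by auto
    define x where "x = (w + h - j) mod h"
    have xh: "x < h" unfolding x_def using h0 by simp
    have "(x + j) mod h = (w + h - j + j) mod h" unfolding x_def by (rule mod_add_left_eq)
    also have "w + h - j + j = w + h" using j by simp
    also have "(w + h) mod h = w" using w by simp
    finally have xj: "(x + j) mod h = w" .
    have ex: "ed h x j \<in> {ed h x j | x. x < h} \<and> v \<in> ed h x j" using xh xj w mem_ed by blast
    have U: "e = ed h x j" if H1: "e \<in> {ed h x j | x. x < h} \<and> v \<in> e" for e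
    proof -
      obtain x' where x': "x' < h" "e = ed h x' j" using H1 by blast
      have "v \<noteq> x'" using x' w by simp
      then have "v = h + (x' + j) mod h" using H1 x' mem_ed by blast
      then have "(x' + j) mod h = (x + j) mod h" using xj w by simp
      then have "(j + x') mod h = (j + x) mod h" by (simp add: add.commute)
      then have "x' mod h = x mod h" by (rule mod_lcancel_nat)
      then have "x' = x" using x'(1) xh by simp
      then show ?thesis using x' by simp
    qed
    show ?thesis by (rule ex1I[of _ "ed h x j"]) (rule ex, rule U)
  qed
  show ?thesis unfolding perfect_matching_def by (intro conjI sub ballI ex1v) simp
qed

lemma col_nonempty:
  assumes n: "even n" and D: "finite D" and dn: "2 * card D \<le> n"
  shows "col_graphs n D \<noteq> {}"
proof -
  define h where "h = n div 2"
  have nh: "n = 2 * h" using n unfolding h_def by simp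
  have "card D \<le> card {..<h}" using dn nh by simp
  then obtain g where g: "g ` D \<subseteq> {..<h}" "inj_on g D" using card_le_inj[OF D] by blast
  define G where "G = {ed h x (g c) | x c. x < h \<and> c \<in> D}"
  define \<phi> where "\<phi> e = (if e \<in> G then (THE c. c \<in> D \<and> (\<exists>x<h. e = ed h x (g c))) else 0)" for e
  have phi: "\<phi> (ed h x (g c)) = c" if "x < h" "c \<in> D" for x c
  proof -
    have inG: "ed h x (g c) \<in> G" using that unfolding G_def by blast
    have "(THE c'. c' \<in> D \<and> (\<exists>x'<h. ed h x (g c) = ed h x' (g c'))) = c"
    proof (rule the_equality)
      show "c \<in> D \<and> (\<exists>x'<h. ed h x (g c) = ed h x' (g c))" using that by blast
    next
      fix c' assume c': "c' \<in> D \<and> (\<exists>x'<h. ed h x (g c) = ed h x' (g c'))"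
      then obtain x' where "x' < h" "ed h x (g c) = ed h x' (g c')" by blast
      then have "g c = g c'" using ed_inj[of x h x' "g c" "g c'"] that g(1) c' by blast
      then have "g c' = g c" by simp
      then show "c' = c" using inj_onD[OF g(2)] c' that(2) by blast
    qed
    then show ?thesis unfolding \<phi>_def using inG by simp
  qed
  have GE: "G \<subseteq> all_edges n" unfolding G_def using ed_edge[OF _ nh] by blast
  have col: "\<forall>e\<in>G. \<phi> e \<in> D"
  proof
    fix e assume "e \<in> G"
    then obtain x c where "e = ed h x (g c)" "x < h" "c \<in> D" unfolding G_def by blast
    then show "\<phi> e \<in> D" using phi by simp
  qed
  have zero: "\<forall>e. e \<notin> G \<longrightarrow> \<phi> e = 0" unfolding \<phi>_def by simp
  have cls: "{e\<in>G. \<phi> e = c} = {ed h x (g c) | x. x < h}" if c: "c \<in> D" for c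
  proof
    show "{e\<in>G. \<phi> e = c} \<subseteq> {ed h x (g c) | x. x < h}"
    proof
      fix e assume "e \<in> {e\<in>G. \<phi> e = c}"
      then obtain x c' where e: "e = ed h x (g c')" "x < h" "c' \<in> D" "\<phi> e = c" unfolding G_def by blast
      then have "c' = c" using phi by simp
      then show "e \<in> {ed h x (g c) | x. x < h}" using e by blast
    qed
  next
    show "{ed h x (g c) | x. x < h} \<subseteq> {e\<in>G. \<phi> e = c}"
    proof
      fix e assume "e \<in> {ed h x (g c) | x. x < h}"
      then obtain x where x: "e = ed h x (g c)" "x < h" by blast
      then have "e \<in> G" using c unfolding G_def by blast
      moreover have "\<phi> e = c" using phi[OF x(2) c] x(1) by simp
      ultimately show "e \<in> {e\<in>G. \<phi> e = c}" by blast
    qed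
  qed
  have pm: "\<forall>c\<in>D. perfect_matching n {e\<in>G. \<phi> e = c}"
  proof
    fix c assume c: "c \<in> D"
    then have "g c < h" using g(1) by blast
    then show "perfect_matching n {e\<in>G. \<phi> e = c}" unfolding cls[OF c] by (rule ed_pm[OF nh])
  qed
  have deg: "\<forall>v\<in>{..<n}. degree G v = card D" using deg_from_pm[OF GE col pm] by blast
  have "(G, \<phi>) \<in> col_graphs n D" unfolding col_graphs_def using GE deg col zero pm by (simp only: mem_Collect_eq case_prod_conv)
  then show ?thesis by blast
qed


lemma arith_main:
  fixes \<mu> N t d :: real
  assumes mu: "0 < \<mu>" "\<mu> < 1/1000" and N1: "12/\<mu>^3 \<le> N" and N2: "1000/\<mu> \<le> N"
    and t_def: "t = \<mu> * N" and d_def: "d = t + 1"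
  shows "6*d < N" "2*d \<le> N" "6*d^3/(N-6*d) + 3 \<le> 8*t^3/N - 1"
    "(2*N + (6*d^3/(N - 6*d) + 3) - (8*t^3/N - 1)) * ln 2 \<le> -(\<mu>^3*N^2)"
proof -
  have Npos: "0 < N" using N2 mu by (smt (verit) divide_pos_pos)
  have t1000: "1000 \<le> t" using N2 mu unfolding t_def by (simp add: field_simps)
  have tN: "1000 * t \<le> N" using mu Npos unfolding t_def by (simp add: field_simps)
  have m3: "12 \<le> \<mu>^3 * N" using N1 mu by (simp add: field_simps)
  show d6: "6*d < N" using t1000 tN d_def by linarith
  show "2*d \<le> N" using t1000 tN d_def by linarith
  have pos: "0 < N - 6*d" using d6 by simp
  define s where "s = t^3 / N"
  have mt: "\<mu>^3 * N^2 = s" unfolding s_def t_def using Npos by (simp add: field_simps power3_eq_cube power2_eq_square)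
  have s12: "12 * N \<le> s"
  proof -
    have "12 * N \<le> (\<mu>^3 * N) * N" using m3 Npos by (intro mult_right_mono) auto
    then show ?thesis unfolding mt[symmetric] by (simp add: power2_eq_square mult.assoc)
  qed
  have tt: "1000 * t \<le> t * t" using t1000 by (intro mult_right_mono) auto
  have c1: "3*t^2 + 3*t + 1 \<le> 4*t^2" using tt t1000 unfolding power2_eq_square by linarith
  have "1000 * t^2 \<le> t * t^2" using t1000 by (intro mult_right_mono) auto
  then have c2: "4*t^2 \<le> (1/250) * t^3" by (simp add: power3_eq_cube power2_eq_square)
  have d3: "d^3 \<le> (251/250) * t^3"
  proof -
    have "d^3 = t^3 + (3*t^2 + 3*t + 1)" unfolding d_def by (simp add: power3_eq_cube power2_eq_square algebra_simps)
    then show ?thesis using c1 c2 by linarith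
  qed
  have den: "(993/1000) * N \<le> N - 6*d" using t1000 tN d_def by linarith
  have t3pos: "0 \<le> t^3" using t1000 by simp
  have "6*d^3 \<le> (241/40) * t^3" using d3 t3pos by linarith
  also have "\<dots> \<le> ((25/4) * s) * ((993/1000) * N)" unfolding s_def using Npos t1000 by (simp add: field_simps)
  also have "\<dots> \<le> ((25/4) * s) * (N - 6*d)" using den s12 Npos by (intro mult_left_mono) auto
  finally have "6*d^3 / (N - 6*d) \<le> (25/4) * s" using pos by (simp add: pos_divide_le_eq)
  moreover have "8*t^3/N = 8 * s" unfolding s_def by simp
  moreover have "4 \<le> (7/4) * s" using s12 Npos t1000 tN by linarith
  ultimately show "6*d^3/(N-6*d) + 3 \<le> 8*t^3/N - 1" by linarith
  have X: "2*N + (6*d^3/(N - 6*d) + 3) - (8*t^3/N - 1) \<le> -(3/2) * s"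
    using \<open>6*d^3 / (N - 6*d) \<le> (25/4) * s\<close> \<open>8*t^3/N = 8 * s\<close> s12 Npos t1000 tN by linarith
  have l2: "2/3 \<le> ln (2::real)" by (rule ln2_ge_two_thirds)
  have "(2*N + (6*d^3/(N - 6*d) + 3) - (8*t^3/N - 1)) * ln 2 \<le> (-(3/2) * s) * ln 2"
    using X l2 by (intro mult_right_mono) auto
  also have "\<dots> \<le> (-(3/2) * s) * (2/3)"
    using l2 s12 Npos by (intro mult_left_mono_neg) auto
  also have "\<dots> = -(\<mu>^3*N^2)" unfolding mt by simp
  finally show "(2*N + (6*d^3/(N - 6*d) + 3) - (8*t^3/N - 1)) * ln 2 \<le> -(\<mu>^3*N^2)" .
qed


lemma pow2_exp: "(2::real)^m = exp (real m * ln 2)"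
proof -
  have "(2::real)^m = 2 powr (real m)" by (simp add: powr_realpow)
  also have "\<dots> = exp (real m * ln 2)" by (simp add: powr_def)
  finally show ?thesis .
qed

theorem lemma7:
  shows "\<exists>c0::real. c0 > 0 \<and> (\<forall>\<mu>::real. 0 < \<mu> \<and> \<mu> < c0 \<longrightarrow>
     (\<exists>n0::nat. \<forall>n::nat. \<forall>D::nat set.
        even n \<and> n \<ge> n0 \<and> D \<subseteq> {1..n-1} \<and> real (card D) = \<mu> * real n + 1 \<longrightarrow>
        prob_quasirandom n D \<ge> 1 - exp (- (\<mu> ^ 3 * real n ^ 2))))"
proof (intro exI[of _ "1/1000"] conjI allI impI)
  show "(0::real) < 1/1000" by simp
  fix \<mu> :: real assume mu: "0 < \<mu> \<and> \<mu> < 1/1000"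
  show "\<exists>n0::nat. \<forall>n::nat. \<forall>D::nat set.
        even n \<and> n \<ge> n0 \<and> D \<subseteq> {1..n-1} \<and> real (card D) = \<mu> * real n + 1 \<longrightarrow>
        prob_quasirandom n D \<ge> 1 - exp (- (\<mu> ^ 3 * real n ^ 2))"
  proof (intro exI[of _ "nat \<lceil>12/\<mu>^3\<rceil> + nat \<lceil>1000/\<mu>\<rceil>"] allI impI)
    fix n :: nat and D :: "nat set"
    assume H: "even n \<and> n \<ge> nat \<lceil>12/\<mu>^3\<rceil> + nat \<lceil>1000/\<mu>\<rceil> \<and> D \<subseteq> {1..n-1} \<and> real (card D) = \<mu> * real n + 1"
    define N where "N = real n"
    define t where "t = \<mu> * N"
    define d where "d = t + 1"
    have dD: "real (card D) = d" using H unfolding d_def t_def N_def by simp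
    have N1: "12/\<mu>^3 \<le> N"
    proof -
      have "12/\<mu>^3 \<le> real (nat \<lceil>12/\<mu>^3\<rceil>)" by linarith
      also have "\<dots> \<le> N" using H unfolding N_def by linarith
      finally show ?thesis .
    qed
    have N2: "1000/\<mu> \<le> N"
    proof -
      have "1000/\<mu> \<le> real (nat \<lceil>1000/\<mu>\<rceil>)" by linarith
      also have "\<dots> \<le> N" using H unfolding N_def by linarith
      finally show ?thesis .
    qed
    have mu1: "0 < \<mu>" "\<mu> < 1/1000" using mu by auto
    note AM = arith_main[OF mu1 N1 N2 t_def d_def]
    have Npos: "0 < N" using N2 mu1 by (smt (verit) divide_pos_pos)
    have t0: "0 \<le> t" unfolding t_def using mu1 Npos by simp
    have finD: "finite D" using H finite_subset[of D "{1..n-1}"] by blast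
    have dpos: "0 < card D" using dD t0 d_def by simp
    have n6: "6 * card D < n" using AM(1) dD unfolding N_def by (simp add: of_nat_less_iff[symmetric])
    have n2: "2 * card D \<le> n" using AM(2) dD unfolding N_def by (simp add: of_nat_le_iff[symmetric])
    have nd: "real (n - 6 * card D) = N - 6 * d" using n6 dD unfolding N_def by (simp add: of_nat_diff)
    define a where "a = 6*d^3/(N - 6*d)"
    define k0 where "k0 = nat \<lceil>a\<rceil> + 2"
    define K where "K = nat \<lfloor>8*t^3/N\<rfloor>"
    have apos: "0 \<le> a" unfolding a_def using AM(1) d_def t0 by simp
    have k0a: "real k0 \<le> a + 3" unfolding k0_def using apos by linarith
    have k02: "2 \<le> k0" unfolding k0_def by simp
    have s0: "0 \<le> 8*t^3/N" using t0 Npos by simp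
    have Ks: "8*t^3/N - 1 \<le> real K" unfolding K_def using s0 by linarith
    have Ks2: "real K \<le> 8*t^3/N" unfolding K_def using s0 by linarith
    have hk0: "6 * card D ^ 3 \<le> k * (n - 6 * card D)" if "k0 \<le> k" for k
    proof -
      have "a \<le> real k" using that unfolding k0_def by linarith
      then have "6*d^3 \<le> real k * (N - 6*d)" unfolding a_def using AM(1) by (simp add: pos_divide_le_eq)
      then have "real (6 * card D ^ 3) \<le> real (k * (n - 6 * card D))" using dD nd by simp
      then show ?thesis by (simp only: of_nat_le_iff)
    qed
    have kK: "k0 \<le> K"
    proof -
      have "real k0 \<le> real K" using k0a AM(3) Ks unfolding a_def by linarith
      then show ?thesis by simp
    qed
    have Kle: "real K \<le> 8 * (real (card D) - 1) ^ 3 / real n" using Ks2 dD d_def unfolding N_def by simp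
    have ne: "col_graphs n D \<noteq> {}" using col_nonempty[of n D] H finD n2 by blast
    have pb: "prob_quasirandom n D \<ge> 1 - 4^n * 2^k0 / 2^K"
      by (rule prob_bound[OF finD dpos k02 hk0 kK Kle ne])
    have "(4::real)^n * 2^k0 / 2^K = exp ((2*N + real k0 - real K) * ln 2)"
    proof -
      have "(4::real)^n = 2^(2*n)" by (simp add: power_mult)
      then have "(4::real)^n * 2^k0 / 2^K = exp (real (2*n) * ln 2) * exp (real k0 * ln 2) / exp (real K * ln 2)"
        by (simp add: pow2_exp)
      also have "\<dots> = exp ((2*N + real k0 - real K) * ln 2)"
        unfolding N_def by (simp add: exp_add[symmetric] exp_diff[symmetric] algebra_simps)
      finally show ?thesis .
    qed
    also have "\<dots> \<le> exp (- (\<mu> ^ 3 * real n ^ 2))"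
    proof -
      have "(2*N + real k0 - real K) * ln 2 \<le> (2*N + (a + 3) - (8*t^3/N - 1)) * ln 2"
        using k0a Ks by (intro mult_right_mono) auto
      also have "\<dots> \<le> -(\<mu>^3*N^2)" using AM(4) unfolding a_def .
      finally show ?thesis unfolding N_def by simp
    qed
    finally show "prob_quasirandom n D \<ge> 1 - exp (- (\<mu> ^ 3 * real n ^ 2))" using pb by linarith
  qed
qed


end
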